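(* In the setting described in the context (the random experiment for SA2), for any construction map $\zeta$ and any slot allocation $\tau$ of $\Lambda(\zeta)$ that occur with non-zero probability, the associated service placement $X^\tau$ is feasible, i.e. $\sum_{i\in S}s_i\mathbf 1[j\in X^\tau_i]\le c_j$ for all $j\in V$.
   Context: An SPSC instance: finite sets $S$ (services), $V$ (nodes), $U$ (users); sizes $s_i>0$; capacities $c_j>0$; for each user $k$ a service $i_k\in S$, a set $T_k\subseteq V$, a reward $w_k>0$. Let $\{x_{ij}\},\{y_k\}$ be an optimal solution of the LP with nonnegative variables: maximize $\sum_ky_kw_k$ s.t. $y_k\le\sum_{j\in T_k}x_{i_kj}$, $y_k\le1$; $\sum_ix_{ij}s_i\le c_j$; $x_{ij}=0$ if $s_i>c_j$; $0\le x_{ij}\le1$. Let $\beta:=1/4,\gamma:=1/2,\delta:=1/4$, $\mathbb N=\{1,2,\dots\}$. For $j\in V$: $P_j^\oplus:=\{i:c_j/2<s_i\le c_j\}$, $P_j^\ominus:=\{i:c_j/4<s_i\le c_j/2\}$, $P_j^q:=\{i:\gamma^qc_j\beta<s_i\le\gamma^{q-1}c_j\beta\}$ ($q\in\mathbb N$); $d_j^q:=\sum_{i\in P_j^q}x_{ij}$ for $q\in\mathbb N\cup\{\oplus,\ominus\}$; $v_j:=\delta c_j/\sum_{i:s_i\le c_j\beta}s_ix_{ij}$; $n_j^q:=\lceil v_jd_j^q\rceil$; $h_j:=d_j^\ominus$ if $d_j^\ominus<2$, else $d_j^\ominus/2$. A construction map $\zeta:V\to\{1,2,3\}$ has slot set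 $\Lambda(\zeta)$ (slot $\sigma$ has node $\nu(\sigma)$, class $\kappa(\sigma)$): for each $j$, one slot of class $\oplus$ if $\zeta(j)=1$; two slots of class $\ominus$ if $\zeta(j)=2$; for each $q\in\mathbb N$, $n_j^q$ slots of class $q$ if $\zeta(j)=3$; no other slots on $j$. A slot allocation of $\Lambda$ is $\tau:\Lambda\to S$ with $\tau(\sigma)\in P^{\kappa(\sigma)}_{\nu(\sigma)}$; $X^\tau_i:=\{j:\exists\sigma,\nu(\sigma)=j,\tau(\sigma)=i\}$. Random experiment: $\zeta(j)$ independent over $j$, equal to $1,2,3$ with probabilities $\delta d_j^\oplus,\ \delta h_j,\ 1-\delta d_j^\oplus-\delta h_j$; given $\zeta$, each slot $\sigma\in\Lambda(\zeta)$ independently gets $\tau(\sigma)=i$ with probability $x_{i\nu(\sigma)}/d^{\kappa(\sigma)}_{\nu(\sigma)}$, $i\in P^{\kappa(\sigma)}_{\nu(\sigma)}$. *)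

theory Defs
  imports Complex_Main
begin

text \<open>Services have type 's, nodes 'v, users 'u.
  s: sizes, c: capacities, svc k = i_k, T k = T_k, w k = w_k.\<close>

definition spsc_instance ::
  "'s set \<Rightarrow> 'v set \<Rightarrow> 'u set \<Rightarrow> ('s \<Rightarrow> real) \<Rightarrow> ('v \<Rightarrow> real)
   \<Rightarrow> ('u \<Rightarrow> 's) \<Rightarrow> ('u \<Rightarrow> 'v set) \<Rightarrow> ('u \<Rightarrow> real) \<Rightarrow> bool" where
  "spsc_instance S V U s c svc T w \<longleftrightarrow>
     finite S \<and> finite V \<and> finite U \<and>
     (\<forall>i\<in>S. s i > 0) \<and> (\<forall>j\<in>V. c j > 0) \<and>
     (\<forall>k\<in>U. svc k \<in> S \<and> T k \<subseteq> V \<and> w k > 0)"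

definition lp_feasible ::
  "'s set \<Rightarrow> 'v set \<Rightarrow> 'u set \<Rightarrow> ('s \<Rightarrow> real) \<Rightarrow> ('v \<Rightarrow> real)
   \<Rightarrow> ('u \<Rightarrow> 's) \<Rightarrow> ('u \<Rightarrow> 'v set)
   \<Rightarrow> ('s \<Rightarrow> 'v \<Rightarrow> real) \<Rightarrow> ('u \<Rightarrow> real) \<Rightarrow> bool" where
  "lp_feasible S V U s c svc T x y \<longleftrightarrow>
     (\<forall>k\<in>U. 0 \<le> y k \<and> y k \<le> 1 \<and> y k \<le> (\<Sum>j\<in>T k. x (svc k) j)) \<and>
     (\<forall>j\<in>V. (\<Sum>i\<in>S. x i j * s i) \<le> c j) \<and>
     (\<forall>i\<in>S. \<forall>j\<in>V. 0 \<le> x i j \<and> x i j \<le> 1 \<and> (s i > c j \<longrightarrow> x i j = 0))"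

definition lp_optimal ::
  "'s set \<Rightarrow> 'v set \<Rightarrow> 'u set \<Rightarrow> ('s \<Rightarrow> real) \<Rightarrow> ('v \<Rightarrow> real)
   \<Rightarrow> ('u \<Rightarrow> 's) \<Rightarrow> ('u \<Rightarrow> 'v set) \<Rightarrow> ('u \<Rightarrow> real)
   \<Rightarrow> ('s \<Rightarrow> 'v \<Rightarrow> real) \<Rightarrow> ('u \<Rightarrow> real) \<Rightarrow> bool" where
  "lp_optimal S V U s c svc T w x y \<longleftrightarrow>
     lp_feasible S V U s c svc T x y \<and>
     (\<forall>x' y'. lp_feasible S V U s c svc T x' y' \<longrightarrow>
        (\<Sum>k\<in>U. y' k * w k) \<le> (\<Sum>k\<in>U. y k * w k))"

definition beta :: real where "beta = 1/4"
definition gamma :: real where "gamma = 1/2"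
definition delta :: real where "delta = 1/4"

text \<open>Classes: Cplus = \<oplus>, Cminus = \<ominus>, Cq q = q (meaningful for q \<ge> 1).\<close>
datatype cls = Cplus | Cminus | Cq nat

definition Pcls :: "'s set \<Rightarrow> ('s \<Rightarrow> real) \<Rightarrow> ('v \<Rightarrow> real) \<Rightarrow> cls \<Rightarrow> 'v \<Rightarrow> 's set" where
  "Pcls S s c k j = (case k of
      Cplus \<Rightarrow> {i\<in>S. c j / 2 < s i \<and> s i \<le> c j}
    | Cminus \<Rightarrow> {i\<in>S. c j / 4 < s i \<and> s i \<le> c j / 2}
    | Cq q \<Rightarrow> {i\<in>S. gamma ^ q * c j * beta < s i \<and> s i \<le> gamma ^ (q - 1) * c j * beta})"

definition dcls :: "'s set \<Rightarrow> ('s \<Rightarrow> real) \<Rightarrow> ('v \<Rightarrow> real) \<Rightarrow> ('s \<Rightarrow> 'v \<Rightarrow> real)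
                     \<Rightarrow> cls \<Rightarrow> 'v \<Rightarrow> real" where
  "dcls S s c x k j = (\<Sum>i\<in>Pcls S s c k j. x i j)"

text \<open>v_j; division by zero yields 0 (Isabelle convention).\<close>
definition vnode :: "'s set \<Rightarrow> ('s \<Rightarrow> real) \<Rightarrow> ('v \<Rightarrow> real) \<Rightarrow> ('s \<Rightarrow> 'v \<Rightarrow> real)
                      \<Rightarrow> 'v \<Rightarrow> real" where
  "vnode S s c x j = delta * c j / (\<Sum>i\<in>{i\<in>S. s i \<le> c j * beta}. s i * x i j)"

definition nslots :: "'s set \<Rightarrow> ('s \<Rightarrow> real) \<Rightarrow> ('v \<Rightarrow> real) \<Rightarrow> ('s \<Rightarrow> 'v \<Rightarrow> real)
                       \<Rightarrow> nat \<Rightarrow> 'v \<Rightarrow> nat" where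
  "nslots S s c x q j = nat \<lceil>vnode S s c x j * dcls S s c x (Cq q) j\<rceil>"

definition hnode :: "'s set \<Rightarrow> ('s \<Rightarrow> real) \<Rightarrow> ('v \<Rightarrow> real) \<Rightarrow> ('s \<Rightarrow> 'v \<Rightarrow> real)
                      \<Rightarrow> 'v \<Rightarrow> real" where
  "hnode S s c x j = (if dcls S s c x Cminus j < 2 then dcls S s c x Cminus j
                      else dcls S s c x Cminus j / 2)"

text \<open>A slot is a triple (node, class, index); nu = fst, kappa = fst o snd.\<close>
type_synonym 'v slot = "'v \<times> cls \<times> nat"

definition slots :: "'s set \<Rightarrow> 'v set \<Rightarrow> ('s \<Rightarrow> real) \<Rightarrow> ('v \<Rightarrow> real)
                      \<Rightarrow> ('s \<Rightarrow> 'v \<Rightarrow> real) \<Rightarrow> ('v \<Rightarrow> nat) \<Rightarrow> 'v slot set" where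
  "slots S V s c x \<zeta> =
     {(j, Cplus, 0) | j. j \<in> V \<and> \<zeta> j = 1} \<union>
     {(j, Cminus, n) | j n. j \<in> V \<and> \<zeta> j = 2 \<and> n < 2} \<union>
     {(j, Cq q, n) | j q n. j \<in> V \<and> \<zeta> j = 3 \<and> 1 \<le> q \<and> n < nslots S s c x q j}"

definition slot_node :: "'v slot \<Rightarrow> 'v" where "slot_node \<sigma> = fst \<sigma>"
definition slot_cls :: "'v slot \<Rightarrow> cls" where "slot_cls \<sigma> = fst (snd \<sigma>)"

definition slot_allocation ::
  "'s set \<Rightarrow> 'v set \<Rightarrow> ('s \<Rightarrow> real) \<Rightarrow> ('v \<Rightarrow> real) \<Rightarrow> ('s \<Rightarrow> 'v \<Rightarrow> real)
   \<Rightarrow> ('v \<Rightarrow> nat) \<Rightarrow> ('v slot \<Rightarrow> 's) \<Rightarrow> bool" where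
  "slot_allocation S V s c x \<zeta> \<tau> \<longleftrightarrow>
     (\<forall>\<sigma>\<in>slots S V s c x \<zeta>. \<tau> \<sigma> \<in> Pcls S s c (slot_cls \<sigma>) (slot_node \<sigma>))"

definition Xplace ::
  "'s set \<Rightarrow> 'v set \<Rightarrow> ('s \<Rightarrow> real) \<Rightarrow> ('v \<Rightarrow> real) \<Rightarrow> ('s \<Rightarrow> 'v \<Rightarrow> real)
   \<Rightarrow> ('v \<Rightarrow> nat) \<Rightarrow> ('v slot \<Rightarrow> 's) \<Rightarrow> 's \<Rightarrow> 'v set" where
  "Xplace S V s c x \<zeta> \<tau> i =
     {j. \<exists>\<sigma>\<in>slots S V s c x \<zeta>. slot_node \<sigma> = j \<and> \<tau> \<sigma> = i}"

definition zeta_prob :: "'s set \<Rightarrow> ('s \<Rightarrow> real) \<Rightarrow> ('v \<Rightarrow> real) \<Rightarrow> ('s \<Rightarrow> 'v \<Rightarrow> real)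
                          \<Rightarrow> 'v \<Rightarrow> nat \<Rightarrow> real" where
  "zeta_prob S s c x j k =
     (if k = 1 then delta * dcls S s c x Cplus j
      else if k = 2 then delta * hnode S s c x j
      else if k = 3 then 1 - delta * dcls S s c x Cplus j - delta * hnode S s c x j
      else 0)"

definition prob_zeta :: "'s set \<Rightarrow> 'v set \<Rightarrow> ('s \<Rightarrow> real) \<Rightarrow> ('v \<Rightarrow> real)
                          \<Rightarrow> ('s \<Rightarrow> 'v \<Rightarrow> real) \<Rightarrow> ('v \<Rightarrow> nat) \<Rightarrow> real" where
  "prob_zeta S V s c x \<zeta> = (\<Prod>j\<in>V. zeta_prob S s c x j (\<zeta> j))"

definition prob_tau :: "'s set \<Rightarrow> 'v set \<Rightarrow> ('s \<Rightarrow> real) \<Rightarrow> ('v \<Rightarrow> real)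
                         \<Rightarrow> ('s \<Rightarrow> 'v \<Rightarrow> real) \<Rightarrow> ('v \<Rightarrow> nat) \<Rightarrow> ('v slot \<Rightarrow> 's) \<Rightarrow> real" where
  "prob_tau S V s c x \<zeta> \<tau> =
     (\<Prod>\<sigma>\<in>slots S V s c x \<zeta>.
        if \<tau> \<sigma> \<in> Pcls S s c (slot_cls \<sigma>) (slot_node \<sigma>)
        then x (\<tau> \<sigma>) (slot_node \<sigma>) / dcls S s c x (slot_cls \<sigma>) (slot_node \<sigma>)
        else 0)"

end

theory Submission
  imports Defs
begin

lemma geo_Q:
  assumes "finite Q" "\<forall>q\<in>Q. 1 \<le> q"
  shows "(\<Sum>q\<in>Q. ((1::real)/2) ^ q) \<le> 1"
proof -
  have sm: "summable (\<lambda>n. ((1::real)/2) ^ n)" by (rule summable_geometric) simp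
  have "(\<Sum>q\<in>insert 0 Q. ((1::real)/2) ^ q) \<le> (\<Sum>n. ((1::real)/2) ^ n)"
    by (rule sum_le_suminf[OF sm]) (use assms in auto)
  also have "\<dots> = 2" using suminf_geometric[of "(1::real)/2"] by simp
  finally show ?thesis using assms by (subst (asm) sum.insert) auto
qed

lemma Pq_unique:
  assumes "i \<in> Pcls S s c (Cq q) j" "i \<in> Pcls S s c (Cq q') j" "1 \<le> q" "1 \<le> q'" "c j > 0"
  shows "q = q'"
proof (rule ccontr)
  assume ne: "q \<noteq> q'"
  have key: "False" if "i \<in> Pcls S s c (Cq a) j" "i \<in> Pcls S s c (Cq b) j" "a < b" for a b
  proof -
    have "gamma ^ (b - 1) \<le> gamma ^ a"
      by (rule power_decreasing) (use that in \<open>auto simp: gamma_def\<close>)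
    hence "gamma ^ (b - 1) * c j * beta \<le> gamma ^ a * c j * beta"
      using assms(5) by (simp add: beta_def)
    with that show False by (auto simp: Pcls_def)
  qed
  show False
  proof (cases "q < q'")
    case True then show ?thesis using key assms by blast
  next
    case False then have "q' < q" using ne by simp
    then show ?thesis using key assms by blast
  qed
qed


lemma sum_sub_image:
  fixes g :: "'a \<Rightarrow> real"
  assumes "finite A" "B \<subseteq> f ` A" "\<forall>a\<in>A. 0 \<le> g (f a)"
  shows "sum g B \<le> (\<Sum>a\<in>A. g (f a))"
proof -
  have "sum g B \<le> sum g (f ` A)"
    by (rule sum_mono2) (use assms in auto)
  also have "\<dots> \<le> sum (g \<circ> f) A"
    by (rule sum_image_le) (use assms in auto)
  finally show ?thesis by simp
qed

lemma case3_bound: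
  assumes fin: "finite S" and cpos: "c j > 0"
    and spos: "\<forall>i\<in>S. s i > 0" and xnn: "\<forall>i\<in>S. 0 \<le> x i j"
  defines "Q \<equiv> {q. 1 \<le> q \<and> 0 < nslots S s c x q j}"
  shows "finite Q \<and> (\<Sum>q\<in>Q. real (nslots S s c x q j) * (gamma ^ (q - 1) * c j * beta)) \<le> c j"
proof -
  define g where "g q = gamma ^ (q - 1) * c j * beta" for q
  define P where "P q = Pcls S s c (Cq q) j" for q
  define d where "d q = dcls S s c x (Cq q) j" for q
  define A where "A = (\<Sum>i\<in>{i\<in>S. s i \<le> c j * beta}. s i * x i j)"
  define v where "v = vnode S s c x j"
  have PS: "P q \<subseteq> S" for q by (auto simp: P_def Pcls_def)
  have vdef: "v = delta * c j / A" by (simp add: v_def A_def vnode_def)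
  have Ann: "0 \<le> A" unfolding A_def using spos xnn by (intro sum_nonneg) auto
  have vnn: "0 \<le> v" using vdef Ann cpos by (simp add: delta_def)
  have dnn: "0 \<le> d q" for q unfolding d_def dcls_def using xnn by (intro sum_nonneg) (auto simp: Pcls_def)
  have nle: "real (nslots S s c x q j) \<le> v * d q + 1" if "q \<in> Q" for q
  proof -
    have "0 < nslots S s c x q j" using that by (simp add: Q_def)
    hence "0 < \<lceil>v * d q\<rceil>" by (simp add: nslots_def v_def d_def)
    hence "real (nslots S s c x q j) = of_int \<lceil>v * d q\<rceil>" by (simp add: nslots_def v_def d_def)
    also have "\<dots> \<le> v * d q + 1" by simp
    finally show ?thesis .
  qed
  have dpos: "P q \<noteq> {}" if "q \<in> Q" for q
  proof
    assume "P q = {}"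
    hence "d q = 0" by (simp add: d_def dcls_def P_def)
    hence "nslots S s c x q j = 0" by (simp add: nslots_def d_def v_def)
    with that show False by (simp add: Q_def)
  qed
  have QU: "Q \<subseteq> (\<Union>i\<in>S. {q. 1 \<le> q \<and> i \<in> P q})"
  proof
    fix q assume qQ: "q \<in> Q"
    then obtain i where "i \<in> P q" using dpos by blast
    moreover have "1 \<le> q" using qQ by (simp add: Q_def)
    ultimately show "q \<in> (\<Union>i\<in>S. {q. 1 \<le> q \<and> i \<in> P q})" using PS by blast
  qed
  have fin1: "finite {q. 1 \<le> q \<and> i \<in> P q}" for i
  proof (cases "\<exists>q0. 1 \<le> q0 \<and> i \<in> P q0")
    case True
    then obtain q0 where q0: "1 \<le> q0" "i \<in> P q0" by blast
    have "{q. 1 \<le> q \<and> i \<in> P q} \<subseteq> {q0}"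
    proof
      fix q assume "q \<in> {q. 1 \<le> q \<and> i \<in> P q}"
      hence h: "1 \<le> q" "i \<in> P q" by auto
      have "q = q0" by (rule Pq_unique[of i S s c q j q0]) (use h q0 cpos in \<open>simp_all add: P_def\<close>)
      thus "q \<in> {q0}" by simp
    qed
    then show ?thesis using finite_subset by blast
  next
    case False
    hence "{q. 1 \<le> q \<and> i \<in> P q} = {}" by blast
    then show ?thesis by (metis finite.emptyI)
  qed
  have finQ: "finite Q" using QU fin fin1 by (meson finite_UN_I finite_subset)
  have Q1: "\<forall>q\<in>Q. 1 \<le> q" by (simp add: Q_def)
  have gq: "g q = c j / 2 * (1/2) ^ q" if q1: "1 \<le> q" for q
  proof -
    obtain p where "q = Suc p" using q1 by (cases q) auto
    then show ?thesis by (simp add: g_def gamma_def beta_def)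
  qed
  have B1: "(\<Sum>q\<in>Q. g q) \<le> c j / 2"
  proof -
    have "(\<Sum>q\<in>Q. g q) = c j / 2 * (\<Sum>q\<in>Q. (1/2) ^ q)"
      unfolding sum_distrib_left by (rule sum.cong) (use gq Q1 in auto)
    also have "\<dots> \<le> c j / 2 * 1"
      using geo_Q[OF finQ Q1] cpos by (intro mult_left_mono) auto
    finally show ?thesis by simp
  qed
  have B2a: "d q * g q \<le> (\<Sum>i\<in>P q. 2 * (s i * x i j))" if "q \<in> Q" for q
  proof -
    have "d q * g q = (\<Sum>i\<in>P q. x i j * g q)" by (simp add: d_def dcls_def P_def sum_distrib_right)
    also have "\<dots> \<le> (\<Sum>i\<in>P q. 2 * (s i * x i j))"
    proof (rule sum_mono)
      fix i assume iP: "i \<in> P q"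
      have "1 \<le> q" using that Q1 by auto
      then obtain p where qp: "q = Suc p" by (cases q) auto
      have "gamma ^ q * c j * beta < s i" using iP by (simp add: P_def Pcls_def)
      hence g2: "g q \<le> 2 * s i" using qp by (simp add: g_def gamma_def)
      have x0: "0 \<le> x i j" using iP PS xnn by auto
      have "x i j * g q \<le> x i j * (2 * s i)" using mult_left_mono[OF g2 x0] .
      thus "x i j * g q \<le> 2 * (s i * x i j)" by (simp add: algebra_simps)
    qed
    finally show ?thesis .
  qed
  have disj: "\<forall>q\<in>Q. \<forall>q'\<in>Q. q \<noteq> q' \<longrightarrow> P q \<inter> P q' = {}"
  proof (intro ballI impI)
    fix q q' assume qq: "q \<in> Q" "q' \<in> Q" "q \<noteq> q'"
    show "P q \<inter> P q' = {}"
    proof (rule ccontr)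
      assume "P q \<inter> P q' \<noteq> {}"
      then obtain i where "i \<in> P q" "i \<in> P q'" by blast
      hence "q = q'" using Pq_unique[of i S s c q j q'] Q1 qq cpos by (simp add: P_def)
      with qq show False by simp
    qed
  qed
  have finP: "finite (P q)" for q using PS fin finite_subset by blast
  have B2b: "(\<Sum>q\<in>Q. \<Sum>i\<in>P q. 2 * (s i * x i j)) \<le> 2 * A"
  proof -
    have "(\<Sum>q\<in>Q. \<Sum>i\<in>P q. 2 * (s i * x i j)) = (\<Sum>i\<in>(\<Union>q\<in>Q. P q). 2 * (s i * x i j))"
      by (rule sum.UNION_disjoint[symmetric]) (use finQ finP disj in auto)
    also have "\<dots> \<le> (\<Sum>i\<in>{i\<in>S. s i \<le> c j * beta}. 2 * (s i * x i j))"
    proof (rule sum_mono2)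
      show "finite {i\<in>S. s i \<le> c j * beta}" using fin by simp
      show "(\<Union>q\<in>Q. P q) \<subseteq> {i\<in>S. s i \<le> c j * beta}"
      proof
        fix i assume "i \<in> (\<Union>q\<in>Q. P q)"
        then obtain q where q: "q \<in> Q" "i \<in> P q" by auto
        have "gamma ^ (q - 1) \<le> 1" by (simp add: gamma_def power_le_one)
        hence "gamma ^ (q - 1) * c j * beta \<le> c j * beta" using cpos by (simp add: beta_def)
        moreover have "i \<in> S" using q PS by blast
        moreover have "s i \<le> gamma ^ (q - 1) * c j * beta" using q(2) by (simp add: P_def Pcls_def)
        ultimately show "i \<in> {i\<in>S. s i \<le> c j * beta}" by simp
      qed
      fix i assume "i \<in> {i\<in>S. s i \<le> c j * beta} - (\<Union>q\<in>Q. P q)"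
      hence "i \<in> S" by blast
      hence "0 < s i" "0 \<le> x i j" using spos xnn by auto
      thus "0 \<le> 2 * (s i * x i j)" by simp
    qed
    also have "\<dots> = 2 * A" by (simp add: A_def sum_distrib_left)
    finally show ?thesis .
  qed
  have B2: "(\<Sum>q\<in>Q. v * d q * g q) \<le> c j / 2"
  proof -
    have "(\<Sum>q\<in>Q. v * d q * g q) = v * (\<Sum>q\<in>Q. d q * g q)"
      by (simp add: sum_distrib_left mult.assoc)
    also have "\<dots> \<le> v * (2 * A)"
    proof (rule mult_left_mono[OF _ vnn])
      have "(\<Sum>q\<in>Q. d q * g q) \<le> (\<Sum>q\<in>Q. \<Sum>i\<in>P q. 2 * (s i * x i j))"
        by (rule sum_mono) (rule B2a)
      also have "\<dots> \<le> 2 * A" by (rule B2b)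
      finally show "(\<Sum>q\<in>Q. d q * g q) \<le> 2 * A" .
    qed
    also have "\<dots> \<le> c j / 2"
    proof (cases "A = 0")
      case True then show ?thesis using vdef cpos by simp
    next
      case False then show ?thesis using vdef by (simp add: delta_def)
    qed
    finally show ?thesis .
  qed
  have "(\<Sum>q\<in>Q. real (nslots S s c x q j) * g q) \<le> (\<Sum>q\<in>Q. (v * d q + 1) * g q)"
  proof (rule sum_mono)
    fix q assume "q \<in> Q"
    moreover have "0 \<le> g q" using cpos by (simp add: g_def gamma_def beta_def)
    ultimately show "real (nslots S s c x q j) * g q \<le> (v * d q + 1) * g q"
      using nle by (simp add: mult_right_mono)
  qed
  also have "\<dots> = (\<Sum>q\<in>Q. v * d q * g q) + (\<Sum>q\<in>Q. g q)"
    by (simp add: distrib_right sum.distrib)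
  also have "\<dots> \<le> c j" using B1 B2 by simp
  finally show ?thesis using finQ by (simp add: g_def)
qed


theorem theorem9:
  fixes S :: "'s set" and V :: "'v set" and U :: "'u set"
    and s :: "'s \<Rightarrow> real" and c :: "'v \<Rightarrow> real"
    and svc :: "'u \<Rightarrow> 's" and T :: "'u \<Rightarrow> 'v set" and w :: "'u \<Rightarrow> real"
    and x :: "'s \<Rightarrow> 'v \<Rightarrow> real" and y :: "'u \<Rightarrow> real"
    and \<zeta> :: "'v \<Rightarrow> nat" and \<tau> :: "'v slot \<Rightarrow> 's"
  assumes inst: "spsc_instance S V U s c svc T w"
    and opt: "lp_optimal S V U s c svc T w x y"
    and zeta_map: "\<forall>j\<in>V. \<zeta> j \<in> {1, 2, 3}"
    and alloc: "slot_allocation S V s c x \<zeta> \<tau>"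
    and pos: "prob_zeta S V s c x \<zeta> * prob_tau S V s c x \<zeta> \<tau> \<noteq> 0"
  shows "\<forall>j\<in>V. (\<Sum>i\<in>S. s i * (if j \<in> Xplace S V s c x \<zeta> \<tau> i then 1 else 0)) \<le> c j"
proof
  fix j assume jV: "j \<in> V"
  have fin: "finite S" and cpos: "c j > 0" and spos: "\<forall>i\<in>S. s i > 0"
    using inst jV by (auto simp: spsc_instance_def)
  have xnn: "\<forall>i\<in>S. 0 \<le> x i j"
  proof -
    have "lp_feasible S V U s c svc T x y" using opt unfolding lp_optimal_def by blast
    hence "\<forall>i\<in>S. \<forall>j\<in>V. 0 \<le> x i j" unfolding lp_feasible_def by blast
    thus ?thesis using jV by blast
  qed
  have al: "\<tau> \<sigma> \<in> Pcls S s c (slot_cls \<sigma>) (slot_node \<sigma>)" if "\<sigma> \<in> slots S V s c x \<zeta>" for \<sigma>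
    using alloc that by (simp add: slot_allocation_def)
  define Xj where "Xj = {i\<in>S. j \<in> Xplace S V s c x \<zeta> \<tau> i}"
  have eq: "(\<Sum>i\<in>S. s i * (if j \<in> Xplace S V s c x \<zeta> \<tau> i then 1 else 0)) = sum s Xj"
    unfolding Xj_def using fin by (subst sum.inter_filter) (auto intro!: sum.cong)
  have memX: "\<exists>\<sigma>\<in>slots S V s c x \<zeta>. fst \<sigma> = j \<and> \<tau> \<sigma> = i" if "i \<in> Xj" for i
    using that by (auto simp: Xj_def Xplace_def slot_node_def)
  have snn: "0 \<le> s (\<tau> \<sigma>)" if "\<sigma> \<in> slots S V s c x \<zeta>" for \<sigma>
    using al[OF that] spos by (cases "slot_cls \<sigma>") (auto simp: Pcls_def intro: less_imp_le)
  consider "\<zeta> j = 1" | "\<zeta> j = 2" | "\<zeta> j = 3" using zeta_map jV by auto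
  then have "sum s Xj \<le> c j"
  proof cases
    case 1
    have sl: "(j, Cplus, 0) \<in> slots S V s c x \<zeta>" using 1 jV by (simp add: slots_def)
    have "Xj \<subseteq> (\<lambda>_. \<tau> (j, Cplus, 0)) ` {()}"
      using memX 1 by (fastforce simp: slots_def)
    hence "sum s Xj \<le> (\<Sum>a\<in>{()}. s (\<tau> (j, Cplus, 0)))"
      by (rule sum_sub_image[rotated]) (use snn sl in auto)
    also have "\<dots> \<le> c j" using al[OF sl] by (simp add: Pcls_def slot_cls_def slot_node_def)
    finally show ?thesis .
  next
    case 2
    have sl: "(j, Cminus, n) \<in> slots S V s c x \<zeta>" if "n < 2" for n using 2 jV that by (simp add: slots_def)
    have "Xj \<subseteq> (\<lambda>n. \<tau> (j, Cminus, n)) ` {..<2}"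
      using memX 2 by (fastforce simp: slots_def)
    hence "sum s Xj \<le> (\<Sum>n\<in>{..<2::nat}. s (\<tau> (j, Cminus, n)))"
      by (rule sum_sub_image[rotated]) (use snn sl in auto)
    also have "\<dots> \<le> (\<Sum>n\<in>{..<2::nat}. c j / 2)"
      by (rule sum_mono) (use al sl in \<open>fastforce simp: Pcls_def slot_cls_def slot_node_def\<close>)
    finally show ?thesis by simp
  next
    case 3
    define Q where "Q = {q. 1 \<le> q \<and> 0 < nslots S s c x q j}"
    have cb: "finite Q \<and> (\<Sum>q\<in>Q. real (nslots S s c x q j) * (gamma ^ (q - 1) * c j * beta)) \<le> c j"
      unfolding Q_def by (rule case3_bound[where S=S and c=c and j=j and s=s and x=x, OF fin cpos spos xnn])
    define A where "A = Sigma Q (\<lambda>q. {..<nslots S s c x q j})"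
    have finA: "finite A" using cb by (simp add: A_def)
    have sl: "(j, Cq q, n) \<in> slots S V s c x \<zeta>" if "(q, n) \<in> A" for q n
      using 3 jV that by (auto simp: slots_def A_def Q_def)
    have "Xj \<subseteq> (\<lambda>(q, n). \<tau> (j, Cq q, n)) ` A"
    proof
      fix i assume "i \<in> Xj"
      then obtain \<sigma> where \<sigma>: "\<sigma> \<in> slots S V s c x \<zeta>" "fst \<sigma> = j" "\<tau> \<sigma> = i" using memX by blast
      then obtain q n where "\<sigma> = (j, Cq q, n)" "1 \<le> q" "n < nslots S s c x q j"
        using 3 by (auto simp: slots_def)
      then show "i \<in> (\<lambda>(q, n). \<tau> (j, Cq q, n)) ` A" using \<sigma>
        by (auto simp: A_def Q_def intro!: image_eqI[where x="(q, n)"])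
    qed
    hence "sum s Xj \<le> (\<Sum>a\<in>A. s ((\<lambda>(q, n). \<tau> (j, Cq q, n)) a))"
      by (rule sum_sub_image[rotated]) (use snn sl finA in auto)
    also have "\<dots> \<le> (\<Sum>(q, n)\<in>A. gamma ^ (q - 1) * c j * beta)"
    proof (rule sum_mono)
      fix a assume "a \<in> A"
      then obtain q n where a: "a = (q, n)" "(q, n) \<in> A" by (cases a) auto
      show "s ((\<lambda>(q, n). \<tau> (j, Cq q, n)) a) \<le> (case a of (q, n) \<Rightarrow> gamma ^ (q - 1) * c j * beta)"
        using al[OF sl[OF a(2)]] a(1) by (simp add: Pcls_def slot_cls_def slot_node_def)
    qed
    also have "\<dots> = (\<Sum>q\<in>Q. real (nslots S s c x q j) * (gamma ^ (q - 1) * c j * beta))"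
      unfolding A_def using cb by (subst sum.Sigma[symmetric]) auto
    also have "\<dots> \<le> c j" using cb by blast
    finally show ?thesis .
  qed
  with eq show "(\<Sum>i\<in>S. s i * (if j \<in> Xplace S V s c x \<zeta> \<tau> i then 1 else 0)) \<le> c j" by simp
qed

end
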